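(* Let $N=\{1,\ldots,n\}$. $\mathscr{BG}_+(n)$, viewed as a subset of $\mathbb{R}^{2^N\setminus\{\varnothing,N\}}$, is a $(2^n-2)$-dimensional polytope.
   Context: A game on $N$ is a map $v:2^N\to\mathbb{R}$ with $v(\varnothing)=0$. $\mathscr{G}_+(n)$ is the set of games with $v(S)\geqslant 0$ for all $S$ and $v(N)=1$. A collection $\mathscr{B}$ of nonempty subsets of $N$ is balanced if there exist positive weights $(\lambda_S)_{S\in\mathscr{B}}$ with $\sum_{S\in\mathscr{B},S\ni i}\lambda_S=1$ for all $i\in N$; minimal balanced if no proper subcollection is balanced, with unique weights $\lambda^{\mathscr{B}}_S$. $\mathfrak{B}^*(n)$ is the set of minimal balanced collections on $N$ other than $\{N\}$. $\mathscr{BG}_+(n)=\{v\in\mathscr{G}_+(n):\sum_{S\in\mathscr{B}}\lambda^{\mathscr{B}}_Sv(S)\leqslant 1\ \forall\mathscr{B}\in\mathfrak{B}^*(n)\}$, i.e. the nonnegative games with $v(N)=1$ having nonempty core. *)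

theory Defs
  imports "HOL-Analysis.Analysis"
begin

text \<open>Player set N is the finite type 'n (N = UNIV). A game is a vector
  v :: real ^ ('n set) indexed by all coalitions, with v $ {} = 0.\<close>

definition balancing_weights :: "'n::finite set set \<Rightarrow> ('n set \<Rightarrow> real) \<Rightarrow> bool" where
  "balancing_weights B lam \<longleftrightarrow>
     (\<forall>S\<in>B. lam S > 0) \<and> (\<forall>i. (\<Sum>S\<in>{S\<in>B. i \<in> S}. lam S) = 1)"

definition balanced :: "'n::finite set set \<Rightarrow> bool" where
  "balanced B \<longleftrightarrow> {} \<notin> B \<and> (\<exists>lam. balancing_weights B lam)"

definition min_balanced :: "'n::finite set set \<Rightarrow> bool" where
  "min_balanced B \<longleftrightarrow> balanced B \<and> (\<forall>B'. B' \<subset> B \<longrightarrow> \<not> balanced B')"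

text \<open>The (unique) weights of a minimal balanced collection, extended by 0 outside B.\<close>
definition mb_weight :: "'n::finite set set \<Rightarrow> 'n set \<Rightarrow> real" where
  "mb_weight B = (THE lam. balancing_weights B lam \<and> (\<forall>S. S \<notin> B \<longrightarrow> lam S = 0))"

definition Bstar :: "'n::finite set set set" where
  "Bstar = {B. min_balanced B \<and> B \<noteq> {UNIV}}"

definition game :: "real ^ ('n::finite set) \<Rightarrow> bool" where
  "game v \<longleftrightarrow> v $ {} = 0"

definition Gplus :: "(real ^ ('n::finite set)) set" where
  "Gplus = {v. game v \<and> (\<forall>S. v $ S \<ge> 0) \<and> v $ UNIV = 1}"

definition BGplus :: "(real ^ ('n::finite set)) set" where
  "BGplus = {v \<in> Gplus. \<forall>B\<in>Bstar. (\<Sum>S\<in>B. mb_weight B S * v $ S) \<le> 1}"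

text \<open>Coordinate projection of R^(2^N) onto the coordinate subspace
  R^(2^N \ {{},N}) (coordinates {} and N set to 0).\<close>
definition proj_coal :: "real ^ ('n::finite set) \<Rightarrow> real ^ ('n set)" where
  "proj_coal v = (\<chi> S. if S = {} \<or> S = UNIV then 0 else v $ S)"

end

theory Submission
  imports Defs
begin

lemma Bstar_props:
  assumes "B \<in> (Bstar :: 'n::finite set set set)"
  shows "{} \<notin> B" "UNIV \<notin> B"
proof -
  show "{} \<notin> B" using assms by (auto simp: Bstar_def min_balanced_def balanced_def)
  show "UNIV \<notin> B"
  proof
    assume u: "UNIV \<in> B"
    have "balancing_weights {UNIV::'n set} (\<lambda>_. 1)"
      unfolding balancing_weights_def
    proof (intro conjI allI ballI)
      fix i :: 'n
      have e: "{S \<in> {UNIV}. i \<in> S} = {UNIV}" by auto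
      show "(\<Sum>S\<in>{S \<in> {UNIV}. i \<in> S}. (1::real)) = 1" by (simp only: e) simp
    qed simp
    then have "balanced {UNIV :: 'n set}" unfolding balanced_def by force
    moreover have "{UNIV} \<subset> B" using u assms by (auto simp: Bstar_def)
    ultimately show False using assms by (auto simp: Bstar_def min_balanced_def)
  qed
qed

definition PP :: "(real ^ ('n::finite set)) set" where
  "PP = {x. x $ {} = 0 \<and> x $ UNIV = 0 \<and> (\<forall>S. 0 \<le> x $ S) \<and>
     (\<forall>B\<in>Bstar. (\<Sum>S\<in>B. mb_weight B S * x $ S) \<le> 1)}"

lemma sum_proj:
  assumes "B \<in> (Bstar :: 'n::finite set set set)"
  shows "(\<Sum>S\<in>B. mb_weight B S * proj_coal v $ S) = (\<Sum>S\<in>B. mb_weight B S * v $ S)"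
  using Bstar_props[OF assms] by (intro sum.cong) (auto simp: proj_coal_def)

lemma image_eq: "proj_coal ` (BGplus :: (real ^ ('n::finite set)) set) = PP"
proof
  show "proj_coal ` BGplus \<subseteq> (PP :: (real ^ ('n::finite set)) set)"
  proof
    fix x :: "real ^ ('n set)" assume "x \<in> proj_coal ` BGplus"
    then obtain v where v: "v \<in> BGplus" and x: "x = proj_coal v" by auto
    show "x \<in> PP" using v unfolding x PP_def BGplus_def Gplus_def
      by (auto simp: sum_proj) (auto simp: proj_coal_def)
  qed
next
  show "(PP :: (real ^ ('n::finite set)) set) \<subseteq> proj_coal ` BGplus"
  proof
    fix x :: "real ^ ('n set)" assume x: "x \<in> PP"
    define v :: "real ^ ('n set)" where "v = (\<chi> S. if S = UNIV then 1 else x $ S)"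
    have ne: "({} :: 'n set) \<noteq> UNIV" by auto
    have "proj_coal v = x" using x ne by (auto simp: vec_eq_iff proj_coal_def v_def PP_def)
    moreover have "v \<in> BGplus"
    proof -
      have "\<forall>B\<in>Bstar. (\<Sum>S\<in>B. mb_weight B S * v $ S) \<le> 1"
      proof
        fix B :: "'n set set" assume B: "B \<in> Bstar"
        have "(\<Sum>S\<in>B. mb_weight B S * v $ S) = (\<Sum>S\<in>B. mb_weight B S * x $ S)"
          using Bstar_props[OF B] by (intro sum.cong) (auto simp: v_def)
        then show "(\<Sum>S\<in>B. mb_weight B S * v $ S) \<le> 1" using x B by (simp add: PP_def)
      qed
      then show ?thesis using x ne by (auto simp: BGplus_def Gplus_def game_def v_def PP_def)
    qed
    ultimately show "x \<in> proj_coal ` BGplus" by force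
  qed
qed

lemma pair_weights:
  fixes S :: "'n::finite set"
  assumes "S \<noteq> {}" "S \<noteq> UNIV" "balancing_weights {S, -S} lam"
  shows "lam S = 1" "lam (-S) = 1"
proof -
  obtain i where i: "i \<in> S" using assms by auto
  obtain j where j: "j \<notin> S" using assms by auto
  have e1: "{T \<in> {S, -S}. i \<in> T} = {S}" using i by auto
  have "(\<Sum>T\<in>{T \<in> {S, -S}. i \<in> T}. lam T) = 1" using assms(3) unfolding balancing_weights_def by blast
  then show "lam S = 1" by (simp only: e1) simp
  have e2: "{T \<in> {S, -S}. j \<in> T} = {-S}" using j by auto
  have "(\<Sum>T\<in>{T \<in> {S, -S}. j \<in> T}. lam T) = 1" using assms(3) unfolding balancing_weights_def by blast
  then show "lam (-S) = 1" by (simp only: e2) simp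
qed

lemma pair_bw:
  fixes S :: "'n::finite set"
  assumes "S \<noteq> {}" "S \<noteq> UNIV"
  shows "balancing_weights {S, -S} (\<lambda>T. if T \<in> {S, -S} then 1 else 0)"
proof -
  have "S \<noteq> -S" by auto
  have "\<And>i. {T \<in> {S, -S}. i \<in> T} = (if i \<in> S then {S} else {-S})" by auto
  then show ?thesis unfolding balancing_weights_def by auto
qed

lemma pair_mb_weight:
  fixes S :: "'n::finite set"
  assumes "S \<noteq> {}" "S \<noteq> UNIV"
  shows "mb_weight {S, -S} = (\<lambda>T. if T \<in> {S, -S} then 1 else 0)"
  unfolding mb_weight_def
proof (rule the_equality)
  show "balancing_weights {S, - S} (\<lambda>T. if T \<in> {S, - S} then 1 else 0) \<and>
    (\<forall>T. T \<notin> {S, - S} \<longrightarrow> (if T \<in> {S, - S} then 1 else 0) = (0::real))"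
    using pair_bw[OF assms] by simp
next
  fix lam assume h: "balancing_weights {S, - S} lam \<and> (\<forall>T. T \<notin> {S, - S} \<longrightarrow> lam T = 0)"
  show "lam = (\<lambda>T. if T \<in> {S, - S} then 1 else 0)"
  proof
    fix T
    show "lam T = (if T \<in> {S, - S} then 1 else 0)"
    proof (cases "T \<in> {S, -S}")
      case True
      then have "T = S \<or> T = -S" by blast
      then show ?thesis using h pair_weights[OF assms, of lam] True by (elim disjE) simp_all
    next
      case False then show ?thesis using h by simp
    qed
  qed
qed

lemma pair_Bstar:
  fixes S :: "'n::finite set"
  assumes "S \<noteq> {}" "S \<noteq> UNIV"
  shows "{S, -S} \<in> Bstar"
proof -
  have bal: "balanced {S, -S}" unfolding balanced_def using pair_bw[OF assms] assms by auto
  have "\<not> balanced B'" if "B' \<subset> {S, -S}" for B'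
  proof
    assume b: "balanced B'"
    then obtain lam where lam: "balancing_weights B' lam" by (auto simp: balanced_def)
    obtain i where i: "i \<in> S" using assms by auto
    obtain j where j: "j \<notin> S" using assms by auto
    have "B' \<subseteq> {S} \<or> B' \<subseteq> {-S}" using that by auto
    then obtain k where "{T \<in> B'. k \<in> T} = {}"
    proof
      assume "B' \<subseteq> {S}" then have "{T \<in> B'. j \<in> T} = {}" using j by auto
      then show ?thesis using that by blast
    next
      assume "B' \<subseteq> {-S}" then have "{T \<in> B'. i \<in> T} = {}" using i by auto
      then show ?thesis using that by blast
    qed
    then show False using lam unfolding balancing_weights_def by (metis sum.empty zero_neq_one)
  qed
  moreover have "{S, -S} \<noteq> {UNIV}" using assms by auto
  ultimately show ?thesis using bal by (auto simp: Bstar_def min_balanced_def)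
qed

lemma PP_le1:
  assumes "x \<in> (PP :: (real ^ ('n::finite set)) set)"
  shows "x $ S \<le> 1"
proof (cases "S = {} \<or> S = UNIV")
  case True then show ?thesis using assms by (auto simp: PP_def)
next
  case False
  then have ne: "S \<noteq> {}" "S \<noteq> UNIV" by auto
  have d: "S \<noteq> -S" by auto
  have "(\<Sum>T\<in>{S,-S}. mb_weight {S,-S} T * x $ T) \<le> 1"
    using assms pair_Bstar[OF ne] by (auto simp: PP_def)
  then have "x $ S + x $ (-S) \<le> 1" using d by (simp add: pair_mb_weight[OF ne])
  moreover have "x $ (-S) \<ge> 0" using assms by (auto simp: PP_def)
  ultimately show ?thesis by simp
qed

lemma PP_bounded: "bounded (PP :: (real ^ ('n::finite set)) set)"
proof (rule bounded_subset[OF bounded_cbox])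
  show "PP \<subseteq> cbox 0 (\<chi> i. 1 :: real ^ ('n set))"
  proof
    fix x :: "real ^ ('n set)" assume x: "x \<in> PP"
    show "x \<in> cbox 0 (\<chi> i. 1)" unfolding mem_box_cart
      using PP_le1[OF x] x by (auto simp: PP_def)
  qed
qed

lemma inner_c:
  fixes x :: "real ^ ('n::finite set)"
  shows "(\<chi> S. if S \<in> B then mb_weight B S else 0) \<bullet> x = (\<Sum>S\<in>B. mb_weight B S * x $ S)"
proof -
  have "(\<chi> S. if S \<in> B then mb_weight B S else 0) \<bullet> x = (\<Sum>S\<in>UNIV. if S \<in> B then mb_weight B S * x $ S else 0)"
    unfolding inner_vec_def by (intro sum.cong) auto
  also have "\<dots> = (\<Sum>S\<in>B. mb_weight B S * x $ S)" by (simp add: sum.If_cases)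
  finally show ?thesis .
qed

lemma PP_polyhedron: "polyhedron (PP :: (real ^ ('n::finite set)) set)"
proof -
  define c :: "'n set set \<Rightarrow> real ^ ('n set)" where "c B = (\<chi> S. if S \<in> B then mb_weight B S else 0)" for B
  have "PP = {x. axis {} 1 \<bullet> x = (0::real)} \<inter> {x. axis UNIV 1 \<bullet> x = (0::real)} \<inter>
     \<Inter> (range (\<lambda>S. {x. axis S 1 \<bullet> x \<ge> (0::real)})) \<inter> \<Inter> ((\<lambda>B. {x. c B \<bullet> x \<le> 1}) ` Bstar)"
    by (auto simp: PP_def c_def inner_c inner_axis')
  moreover have "polyhedron \<dots>"
    by (intro polyhedron_Int polyhedron_Inter polyhedron_hyperplane polyhedron_halfspace_le
        polyhedron_halfspace_ge) (auto simp: polyhedron_halfspace_ge polyhedron_halfspace_le)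
  ultimately show ?thesis by simp
qed

definition Prop :: "'n::finite set set" where "Prop = {S. S \<noteq> {} \<and> S \<noteq> UNIV}"

lemma card_Prop: "card (Prop :: 'n::finite set set) = 2 ^ CARD('n) - 2"
proof -
  have "(Prop :: 'n set set) = UNIV - {{}, UNIV}" by (auto simp: Prop_def)
  moreover have "({} :: 'n set) \<noteq> UNIV" by auto
  moreover have "card {{}, UNIV :: 'n set} = 2" using \<open>({} :: 'n set) \<noteq> UNIV\<close> by simp
  moreover have "card (UNIV :: 'n set set) = 2 ^ CARD('n)" by (simp add: card_set)
  ultimately show ?thesis using card_Diff_subset[of "{{}, UNIV :: 'n set}" UNIV] by simp
qed

lemma dim_X: "dim ((\<lambda>S. axis S (1::real)) ` (Prop :: 'n::finite set set)) = 2 ^ CARD('n) - 2"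
proof -
  let ?X = "(\<lambda>S. axis S (1::real)) ` (Prop :: 'n::finite set set)"
  have "?X \<subseteq> Basis" by (auto simp: Basis_vec_def)
  then have "independent ?X" using independent_mono independent_Basis by blast
  then have "dim ?X = card ?X" using dim_eq_card_independent by blast
  moreover have "inj_on (\<lambda>S. axis S (1::real)) Prop" by (auto simp: inj_on_def axis_eq_axis)
  ultimately show ?thesis using card_image card_Prop by metis
qed

lemma PP_sub_span: "(PP :: (real ^ ('n::finite set)) set) \<subseteq> span ((\<lambda>S. axis S (1::real)) ` Prop)"
proof
  fix x :: "real ^ ('n set)" assume x: "x \<in> PP"
  have "(\<Sum>b\<in>Basis. (x \<bullet> b) *\<^sub>R b) \<in> span ((\<lambda>S. axis S (1::real)) ` Prop)"
  proof (rule span_sum)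
    fix b :: "real ^ ('n set)" assume "b \<in> Basis"
    then obtain i where b: "b = axis i 1" using axis_inverse by blast
    show "(x \<bullet> b) *\<^sub>R b \<in> span ((\<lambda>S. axis S (1::real)) ` Prop)"
    proof (cases "i \<in> Prop")
      case True then show ?thesis by (intro span_scale span_base) (auto simp: b)
    next
      case False then have "x \<bullet> b = 0" using x by (auto simp: b Prop_def PP_def inner_axis)
      then show ?thesis by (simp add: span_zero)
    qed
  qed
  then show "x \<in> span ((\<lambda>S. axis S (1::real)) ` Prop)" by (simp add: euclidean_representation)
qed

lemma zero_PP: "0 \<in> PP" by (simp add: PP_def)

lemma Y_sub_PP:
  defines "K \<equiv> 1 + (\<Sum>B\<in>(Bstar :: 'n::finite set set set). \<Sum>S\<in>B. \<bar>mb_weight B S\<bar>)"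
  shows "(\<lambda>v. (1/K) *\<^sub>R v) ` ((\<lambda>S. axis S (1::real)) ` (Prop :: 'n set set)) \<subseteq> PP"
proof
  have K0: "K \<ge> 1" unfolding K_def by (simp add: sum_nonneg)
  fix y assume "y \<in> (\<lambda>v. (1/K) *\<^sub>R v) ` ((\<lambda>S. axis S (1::real)) ` (Prop :: 'n set set))"
  then obtain T where T: "T \<in> Prop" and y: "y = (1/K) *\<^sub>R axis T 1" by auto
  have yc: "y $ S = (if S = T then 1/K else 0)" for S by (simp add: y axis_def)
  have "(\<Sum>S\<in>B. mb_weight B S * y $ S) \<le> 1" if B: "B \<in> Bstar" for B
  proof -
    have "(\<Sum>S\<in>B. mb_weight B S * y $ S) = (if T \<in> B then mb_weight B T / K else 0)"
      by (simp add: yc if_distrib sum.If_cases cong: if_cong) 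
    also have "\<dots> \<le> 1"
    proof (cases "T \<in> B")
      case True
      have "\<bar>mb_weight B T\<bar> \<le> (\<Sum>S\<in>B. \<bar>mb_weight B S\<bar>)"
        using True by (intro member_le_sum) auto
      also have "\<dots> \<le> (\<Sum>B\<in>(Bstar :: 'n set set set). \<Sum>S\<in>B. \<bar>mb_weight B S\<bar>)"
        using B by (intro member_le_sum) (auto intro: sum_nonneg)
      finally have "mb_weight B T \<le> K" unfolding K_def by linarith
      then show ?thesis using True K0 by simp
    qed simp
    finally show ?thesis .
  qed
  note Bc = this
  have "T \<noteq> {}" "T \<noteq> UNIV" using T by (auto simp: Prop_def)
  then show "y \<in> PP"
  proof (unfold PP_def mem_Collect_eq, intro conjI ballI allI)
    fix B :: "'n set set" assume "B \<in> Bstar" then show "(\<Sum>S\<in>B. mb_weight B S * y $ S) \<le> 1" by (rule Bc)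
  qed (use K0 in \<open>simp_all add: yc\<close>)
qed

theorem proposition1:
  shows "polytope (proj_coal ` (BGplus :: (real ^ ('n::finite set)) set))
    \<and> aff_dim (proj_coal ` (BGplus :: (real ^ ('n::finite set)) set)) = 2 ^ CARD('n) - 2"
proof -
  let ?X = "(\<lambda>S. axis S (1::real)) ` (Prop :: 'n set set)"
  define K where "K = 1 + (\<Sum>B\<in>(Bstar :: 'n::finite set set set). \<Sum>S\<in>B. \<bar>mb_weight B S\<bar>)"
  have K0: "K \<ge> 1" unfolding K_def by (simp add: sum_nonneg)
  have inj: "inj_on (\<lambda>v. (1/K) *\<^sub>R v) (span ?X)"
    unfolding inj_on_def using K0 by simp
  have d1: "dim ((\<lambda>v. (1/K) *\<^sub>R v) ` ?X) = dim ?X"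
    by (rule dim_image_eq[OF linear_scaleR inj])
  have d2: "dim ((\<lambda>v. (1/K) *\<^sub>R v) ` ?X) \<le> dim (PP :: (real ^ ('n set)) set)"
    by (rule dim_subset) (use Y_sub_PP[where 'n='n] in \<open>simp only: K_def\<close>)
  have d3: "dim (PP :: (real ^ ('n set)) set) \<le> dim (span ?X)"
    by (rule dim_subset[OF PP_sub_span])
  have d4: "dim (span ?X) = dim ?X" by (rule dim_span)
  have a1: "aff_dim (PP :: (real ^ ('n set)) set) = int (dim (PP :: (real ^ ('n set)) set))"
    by (rule aff_dim_zero) (rule hull_inc[OF zero_PP])
  have two: "(2::nat) \<le> 2 ^ CARD('n)"
  proof -
    have "0 < CARD('n)" by (rule finite_UNIV_card_ge_0) simp
    then have "2 ^ 1 \<le> (2::nat) ^ CARD('n)" by (intro power_increasing) simp_all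
    then show ?thesis by simp
  qed
  have "dim (PP :: (real ^ ('n set)) set) = 2 ^ CARD('n) - 2"
    using d1 d2 d3 d4 dim_X[where 'n='n] by linarith
  then have "aff_dim (PP :: (real ^ ('n set)) set) = 2 ^ CARD('n) - 2"
    using a1 two by (simp add: of_nat_diff)
  moreover have "polytope (PP :: (real ^ ('n set)) set)"
    using PP_bounded PP_polyhedron polytope_eq_bounded_polyhedron by blast
  ultimately show ?thesis by (simp add: image_eq)
qed

end
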